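(* For every task arrival process $\mathcal{T}$, the total measure of times at which the scheduler $\texttt{UNK}$ (described in the context) is saturated is at most $3\,\mathrm{T}_{\texttt{OPT}}$, where $\mathrm{T}_{\texttt{OPT}}$ is the awake time of the optimal offline schedule on $\mathcal{T}$.
   Context: Serial-parallel scheduling problem: $p$ identical processors; a task arrival process is a finite set of tasks $\tau_i=(\sigma_i,\pi_i,t_i)$ with arrival time $t_i\ge 0$, serial work $\sigma_i$, parallel work $\pi_i$, $1\le\pi_i/\sigma_i\le p$. A task runs either as a serial job (work $\sigma_i$, at most one processor at a time) or as a parallel job (work $\pi_i$, any number of processors, rate equal to number of processors); the choice is irrevocable once the task is started; time is continuous and preemption is allowed. A task is alive from arrival until completion; the awake time of a schedule is the measure of the set of times at which some task is alive; $\texttt{OPT}$ is an optimal offline schedule (minimizing awake time). The scheduler $\texttt{UNK}$: whenever there are idle processors, $\texttt{UNK}$ takes any arrived but not-yet-started task $\tau_i$ and, if $\tau_i$ arrived more than $\sigma_i$ time ago, starts its serial job; otherwise it starts its parallel job. At each time $\texttt{UNK}$ allocates one processor to each of the (at most $p$) running serial jobs; at most one parallel job runs at a time, and it receives all processors not used by serial jobs. $\texttt{UNK}$ is saturated at a time if all $p$ processors are in use. *)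

theory Defs
  imports "HOL-Analysis.Analysis"
begin

text \<open>Tasks are indexed by i < n.  Task i has arrival time a i, serial work sw i and
parallel work pw i.  There are p identical processors.\<close>

text \<open>A schedule fixes, for every task i, the irrevocable mode choice
(ser i = True: serial job, False: parallel job), the number of processors
r i s used by task i at time s, and its completion time C i.
Time is continuous and preemption is allowed.\<close>

definition valid_schedule ::
  "nat \<Rightarrow> nat \<Rightarrow> (nat \<Rightarrow> real) \<Rightarrow> (nat \<Rightarrow> real) \<Rightarrow> (nat \<Rightarrow> real)
   \<Rightarrow> (nat \<Rightarrow> bool) \<Rightarrow> (nat \<Rightarrow> real \<Rightarrow> nat) \<Rightarrow> (nat \<Rightarrow> real) \<Rightarrow> bool" where
  "valid_schedule p n sw pw a ser r C \<longleftrightarrow>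
     (\<forall>i<n. a i \<le> C i
        \<and> (\<forall>s. s < a i \<or> C i \<le> s \<longrightarrow> r i s = 0)
        \<and> (ser i \<longrightarrow> (\<forall>s. r i s \<le> 1))
        \<and> ((\<lambda>s. real (r i s)) has_integral (if ser i then sw i else pw i)) {a i..C i})
   \<and> (\<forall>s. (\<Sum>i<n. r i s) \<le> p)"

definition awake_time :: "nat \<Rightarrow> (nat \<Rightarrow> real) \<Rightarrow> (nat \<Rightarrow> real) \<Rightarrow> real" where
  "awake_time n a C = measure lborel (\<Union>i<n. {a i..<C i})"

definition opt_awake ::
  "nat \<Rightarrow> nat \<Rightarrow> (nat \<Rightarrow> real) \<Rightarrow> (nat \<Rightarrow> real) \<Rightarrow> (nat \<Rightarrow> real) \<Rightarrow> real" where
  "opt_awake p n sw pw a =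
     Inf {awake_time n a C | ser r C. valid_schedule p n sw pw a ser r C}"

text \<open>A run of UNK is described by the start times S i and completion times C i.
The mode of task i is serial iff it arrived more than sw i time before its start.\<close>

definition unk_serial :: "(nat \<Rightarrow> real) \<Rightarrow> (nat \<Rightarrow> real) \<Rightarrow> (nat \<Rightarrow> real) \<Rightarrow> nat \<Rightarrow> bool" where
  "unk_serial sw a S i \<longleftrightarrow> S i - a i > sw i"

definition unk_nser ::
  "nat \<Rightarrow> (nat \<Rightarrow> real) \<Rightarrow> (nat \<Rightarrow> real) \<Rightarrow> (nat \<Rightarrow> real) \<Rightarrow> (nat \<Rightarrow> real) \<Rightarrow> real \<Rightarrow> nat" where
  "unk_nser n sw a S C s = card {i. i < n \<and> unk_serial sw a S i \<and> S i \<le> s \<and> s < C i}"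

definition unk_par_running ::
  "nat \<Rightarrow> (nat \<Rightarrow> real) \<Rightarrow> (nat \<Rightarrow> real) \<Rightarrow> (nat \<Rightarrow> real) \<Rightarrow> (nat \<Rightarrow> real) \<Rightarrow> real \<Rightarrow> bool" where
  "unk_par_running n sw a S C s \<longleftrightarrow> (\<exists>j<n. \<not> unk_serial sw a S j \<and> S j \<le> s \<and> s < C j)"

definition unk_run ::
  "nat \<Rightarrow> nat \<Rightarrow> (nat \<Rightarrow> real) \<Rightarrow> (nat \<Rightarrow> real) \<Rightarrow> (nat \<Rightarrow> real)
   \<Rightarrow> (nat \<Rightarrow> real) \<Rightarrow> (nat \<Rightarrow> real) \<Rightarrow> bool" where
  "unk_run p n sw pw a S C \<longleftrightarrow>
     \<comment> \<open>tasks start after arrival\<close>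
     (\<forall>i<n. a i \<le> S i)
     \<comment> \<open>a serial job runs on one processor from its start until completion\<close>
   \<and> (\<forall>i<n. unk_serial sw a S i \<longrightarrow> C i = S i + sw i)
     \<comment> \<open>a parallel job receives all processors not used by serial jobs\<close>
   \<and> (\<forall>i<n. \<not> unk_serial sw a S i \<longrightarrow> S i \<le> C i \<and>
        ((\<lambda>s. real p - real (unk_nser n sw a S C s)) has_integral pw i) {S i..C i})
     \<comment> \<open>at most one parallel job at a time\<close>
   \<and> (\<forall>i<n. \<forall>j<n. i \<noteq> j \<and> \<not> unk_serial sw a S i \<and> \<not> unk_serial sw a S j
        \<longrightarrow> C i \<le> S j \<or> C j \<le> S i)
     \<comment> \<open>at most p serial jobs at a time\<close>
   \<and> (\<forall>s. unk_nser n sw a S C s \<le> p)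
     \<comment> \<open>tasks are only started when there are idle processors:
         no serial job starts while a parallel job runs,
         and a parallel job starts only if some processor is free of serial jobs\<close>
   \<and> (\<forall>i<n. \<forall>j<n. unk_serial sw a S i \<and> \<not> unk_serial sw a S j
        \<longrightarrow> \<not> (S j < S i \<and> S i < C j))
   \<and> (\<forall>j<n. \<not> unk_serial sw a S j \<longrightarrow> unk_nser n sw a S C (S j) < p)
     \<comment> \<open>whenever there are idle processors, no arrived task is left unstarted\<close>
   \<and> (\<forall>s. (\<exists>i<n. a i \<le> s \<and> s < S i) \<longrightarrow>
        unk_par_running n sw a S C s \<or> unk_nser n sw a S C s = p)"

definition unk_saturated ::
  "nat \<Rightarrow> nat \<Rightarrow> (nat \<Rightarrow> real) \<Rightarrow> (nat \<Rightarrow> real) \<Rightarrow> (nat \<Rightarrow> real) \<Rightarrow> (nat \<Rightarrow> real) \<Rightarrow> real set" where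
  "unk_saturated p n sw a S C =
     {s. unk_par_running n sw a S C s \<or> unk_nser n sw a S C s = p}"

end

theory Submission
  imports Defs
begin

lemma ind_int:
  fixes A :: "real set"
  assumes "A \<in> sets borel" "bounded A"
  shows "(indicator A has_integral measure lborel A) UNIV"
proof -
  have "((\<lambda>x. 1::real) has_integral measure lborel A) A"
    by (rule has_integral_measure_lborel[OF assms(1) emeasure_bounded_finite[OF assms(2)]])
  moreover have "indicator A = (\<lambda>x. if x \<in> A then 1::real else 0)"
    by (rule ext) (simp add: indicator_def)
  ultimately show ?thesis by (simp only: has_integral_restrict_UNIV)
qed

lemma ind_Icc:
  fixes x y :: real
  assumes "x \<le> y"
  shows "(indicator {x..y} has_integral (y - x)) UNIV"
  using ind_int[of "{x..y}"] assms by simp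

lemma ind_disj_le:
  fixes A :: "nat \<Rightarrow> real set"
  assumes "finite D" "\<forall>j\<in>D. A j \<subseteq> U"
    and "\<forall>i\<in>D. \<forall>j\<in>D. i \<noteq> j \<longrightarrow> A i \<inter> A j = {}"
  shows "(\<Sum>j\<in>D. indicator (A j) s) \<le> (indicator U s :: real)"
proof (cases "\<exists>j\<in>D. s \<in> A j")
  case True
  then obtain j where j: "j \<in> D" "s \<in> A j" by blast
  have "(\<Sum>j\<in>D. indicator (A j) s) = indicator (A j) s + (\<Sum>k\<in>D-{j}. indicator (A k) s)"
    using assms(1) j(1) by (simp add: sum.remove)
  also have "(\<Sum>k\<in>D-{j}. indicator (A k) s) = (0::real)"
    using assms(3) j by (intro sum.neutral) (auto simp: indicator_def)
  finally show ?thesis using j assms(2) by (auto simp: indicator_def)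
next
  case False
  then have "(\<Sum>j\<in>D. indicator (A j) s) = (0::real)"
    by (intro sum.neutral) (auto simp: indicator_def)
  then show ?thesis by (simp add: indicator_def)
qed

lemma meas_mono:
  fixes A B :: "real set"
  assumes "A \<subseteq> B" "A \<in> sets borel" "B \<in> sets borel" "bounded B"
  shows "measure lborel A \<le> measure lborel B"
proof -
  have "bounded A" using assms bounded_subset by blast
  show ?thesis
    by (rule has_integral_le[OF ind_int[OF assms(2) \<open>bounded A\<close>] ind_int[OF assms(3,4)]])
       (use assms(1) in \<open>auto simp: indicator_def\<close>)
qed

lemma sum_meas_le:
  fixes A :: "nat \<Rightarrow> real set"
  assumes "finite D" "\<forall>j\<in>D. A j \<subseteq> U \<and> A j \<in> sets borel"
    and "\<forall>i\<in>D. \<forall>j\<in>D. i \<noteq> j \<longrightarrow> A i \<inter> A j = {}"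
    and "U \<in> sets borel" "bounded U"
  shows "(\<Sum>j\<in>D. measure lborel (A j)) \<le> measure lborel U"
proof -
  have "((\<lambda>s. \<Sum>j\<in>D. indicator (A j) s) has_integral (\<Sum>j\<in>D. measure lborel (A j))) UNIV"
    using assms by (intro has_integral_sum ind_int) (auto intro: bounded_subset)
  then show ?thesis
    by (rule has_integral_le[OF _ ind_int[OF assms(4,5)]])
       (use ind_disj_le[OF assms(1) _ assms(3)] assms(2) in auto)
qed

lemma D_lemma:
  fixes m w a S :: "nat \<Rightarrow> real"
  assumes fin: "finite D" and U: "U \<in> sets borel" "bounded U"
  and H: "\<forall>j\<in>D. 0 \<le> m j \<and> m j \<le> w j \<and> a j \<le> S j \<and> S j \<le> a j + w j \<and> {a j..<a j + w j} \<subseteq> U"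
  and dis: "\<forall>i\<in>D. \<forall>j\<in>D. i \<noteq> j \<longrightarrow> S i + m i \<le> S j \<or> S j + m j \<le> S i"
  shows "(\<Sum>j\<in>D. m j) \<le> 2 * measure lborel U"
proof -
  define J where "J j = {S j..<S j + m j}" for j
  define E where "E j = (if J j \<subseteq> U then {} else {a j..<S j})" for j
  have JU: "J j \<inter> U \<in> sets borel" "J j - U \<in> sets borel" "J j \<in> sets borel" "E j \<in> sets borel" for j
    using U by (auto simp: J_def E_def)
  have 1: "m j \<le> measure lborel (J j \<inter> U) + measure lborel (E j)" if j: "j \<in> D" for j
  proof -
    have "m j = measure lborel (J j)" using H j by (simp add: J_def)
    also have "J j = (J j \<inter> U) \<union> (J j - U)" by blast
    also have "measure lborel \<dots> \<le> measure lborel (J j \<inter> U) + measure lborel (J j - U)"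
    proof (rule measure_subadditive)
      have b1: "bounded (J j \<inter> U)" using U(2) by (simp add: bounded_Int)
      have b2: "bounded (J j - U)" by (rule bounded_subset[of "{S j..S j + m j}"]) (auto simp: J_def)
      show "emeasure lborel (J j \<inter> U) \<noteq> \<infinity>" using emeasure_bounded_finite[OF b1] by simp
      show "emeasure lborel (J j - U) \<noteq> \<infinity>" using emeasure_bounded_finite[OF b2] by simp
    qed (use JU in auto)
    also have "measure lborel (J j - U) \<le> measure lborel (E j)"
    proof (cases "J j \<subseteq> U")
      case True then have "J j - U = {}" by blast
      then have "measure lborel (J j - U) = 0" by (simp only: measure_empty)
      then show ?thesis using True by (simp add: E_def)
    next
      case False
      have sub: "J j - U \<subseteq> {a j + w j..<S j + m j}"
      proof
        fix x assume x: "x \<in> J j - U"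
        have "{a j..<a j + w j} \<subseteq> U" using H j by auto
        then have "\<not> (a j \<le> x \<and> x < a j + w j)" using x by auto
        then show "x \<in> {a j + w j..<S j + m j}" using x H j by (auto simp: J_def)
      qed
      have "measure lborel (J j - U) \<le> measure lborel {a j + w j..<S j + m j}"
        by (rule meas_mono[OF sub JU(2)]) auto
      also have "\<dots> \<le> S j - a j"
        using H j by (cases "a j + w j \<le> S j + m j") auto
      finally show ?thesis using False H j by (simp add: E_def)
    qed
    finally show ?thesis by simp
  qed
  have 2: "(\<Sum>j\<in>D. measure lborel (J j \<inter> U)) \<le> measure lborel U"
  proof (rule sum_meas_le[OF fin _ _ U])
    show "\<forall>i\<in>D. \<forall>j\<in>D. i \<noteq> j \<longrightarrow> J i \<inter> U \<inter> (J j \<inter> U) = {}"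
      using dis by (fastforce simp: J_def)
  qed (use JU in auto)
  have 3: "(\<Sum>j\<in>D. measure lborel (E j)) \<le> measure lborel U"
  proof (rule sum_meas_le[OF fin _ _ U])
    show "\<forall>j\<in>D. E j \<subseteq> U \<and> E j \<in> sets borel"
    proof
      fix j assume j: "j \<in> D"
      have "{a j..<S j} \<subseteq> {a j..<a j + w j}" using H j by auto
      moreover have "{a j..<a j + w j} \<subseteq> U" using H j by blast
      ultimately have "{a j..<S j} \<subseteq> U" by (rule subset_trans)
      then show "E j \<subseteq> U \<and> E j \<in> sets borel" using JU by (simp add: E_def)
    qed
    show "\<forall>i\<in>D. \<forall>j\<in>D. i \<noteq> j \<longrightarrow> E i \<inter> E j = {}"
    proof (intro ballI impI)
      fix i j assume ij: "i \<in> D" "j \<in> D" "i \<noteq> j"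
      have key: "E i \<inter> E j = {}" if ij: "i \<in> D" "j \<in> D" and o: "S i + m i \<le> S j" for i j
      proof (cases "J i \<subseteq> U \<or> J j \<subseteq> U")
        case True then show ?thesis by (auto simp: E_def)
      next
        case False
        then obtain t where t: "t \<in> J i" "t \<notin> U" by (auto simp: E_def)
        have "t < S j" using t o by (auto simp: J_def)
        moreover have "t \<notin> {a j..<a j + w j}"
        proof
          assume "t \<in> {a j..<a j + w j}"
          moreover have "{a j..<a j + w j} \<subseteq> U" using H ij by blast
          ultimately show False using t by blast
        qed
        ultimately have "t < a j" using H ij by auto
        then have "S i < a j" using t by (auto simp: J_def)
        then show ?thesis using False by (auto simp: E_def)
      qed
      show "E i \<inter> E j = {}"
        using dis ij key[of i j] key[of j i] by blast
    qed
  qed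
  have "(\<Sum>j\<in>D. m j) \<le> (\<Sum>j\<in>D. measure lborel (J j \<inter> U) + measure lborel (E j))"
    by (rule sum_mono) (rule 1)
  also have "\<dots> \<le> 2 * measure lborel U" using 2 3 by (simp add: sum.distrib)
  finally show ?thesis .
qed


lemma U_props:
  fixes a C :: "nat \<Rightarrow> real"
  shows "(\<Union>i<n. {a i..<C i}) \<in> sets borel" "bounded (\<Union>i<n. {a i..<C i})"
proof -
  show "(\<Union>i<n. {a i..<C i}) \<in> sets borel" by (intro sets.finite_UN) auto
  have "bounded {a i..<C i}" for i by (rule bounded_subset[of "{a i..C i}"]) auto
  then show "bounded (\<Union>i<n. {a i..<C i})" by (intro bounded_UN) auto
qed

lemma opt_work:
  assumes V: "valid_schedule p n sw pw a ser r C"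
  shows "(\<Sum>i<n. if ser i then sw i else pw i) \<le> real p * measure lborel (\<Union>i<n. {a i..<C i})"
proof -
  let ?U = "\<Union>i<n. {a i..<C i}"
  have ri: "((\<lambda>s. real (r i s)) has_integral (if ser i then sw i else pw i)) UNIV" if i: "i < n" for i
  proof -
    have h: "((\<lambda>s. real (r i s)) has_integral (if ser i then sw i else pw i)) {a i..C i}"
      and z: "\<forall>s. s < a i \<or> C i \<le> s \<longrightarrow> r i s = 0"
      using V i unfolding valid_schedule_def by auto
    have "(\<lambda>s. if s \<in> {a i..C i} then real (r i s) else 0) = (\<lambda>s. real (r i s))"
      using z by (auto intro!: ext)
    then show ?thesis using h by (metis has_integral_restrict_UNIV)
  qed
  have sum: "((\<lambda>s. \<Sum>i<n. real (r i s)) has_integral (\<Sum>i<n. if ser i then sw i else pw i)) UNIV"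
    by (rule has_integral_sum) (use ri in auto)
  have rhs: "((\<lambda>s. real p * indicator ?U s) has_integral (real p * measure lborel ?U)) UNIV"
    by (intro has_integral_mult_right ind_int U_props)
  show ?thesis
  proof (rule has_integral_le[OF sum rhs])
    fix s :: real
    show "(\<Sum>i<n. real (r i s)) \<le> real p * indicator ?U s"
    proof (cases "s \<in> ?U")
      case True
      have "(\<Sum>i<n. r i s) \<le> p" using V unfolding valid_schedule_def by auto
      then have "(\<Sum>i<n. real (r i s)) \<le> real p" by (metis of_nat_le_iff of_nat_sum)
      then show ?thesis using True by simp
    next
      case False
      have "\<forall>i<n. r i s = 0" using V False unfolding valid_schedule_def
        by (metis (no_types, lifting) UN_I atLeastLessThan_iff lessThan_iff not_le)
      then show ?thesis using False by simp
    qed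
  qed
qed

lemma opt_serial:
  assumes V: "valid_schedule p n sw pw a ser r C" and i: "i < n" "ser i"
  shows "{a i..<a i + sw i} \<subseteq> (\<Union>i<n. {a i..<C i})"
proof -
  have h: "((\<lambda>s. real (r i s)) has_integral sw i) {a i..C i}"
    and le: "\<forall>s. r i s \<le> 1" and ac: "a i \<le> C i"
    using V i unfolding valid_schedule_def by auto
  have "((\<lambda>s. 1::real) has_integral (C i - a i)) {a i..C i}"
    using has_integral_const_real[of "1::real" "a i" "C i"] ac by simp
  then have "sw i \<le> C i - a i"
    by (rule has_integral_le[OF h]) (use le in auto)
  then have "{a i..<a i + sw i} \<subseteq> {a i..<C i}" by auto
  then show ?thesis using i by blast
qed


lemma unk_work:
  fixes p n :: nat and sw pw a S C :: "nat \<Rightarrow> real"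
  assumes p: "p \<ge> 1" and pos: "\<forall>i<n. 0 \<le> sw i"
    and R: "unk_run p n sw pw a S C"
    and meas: "unk_saturated p n sw a S C \<in> sets borel"
  shows "real p * measure lborel (unk_saturated p n sw a S C)
           \<le> (\<Sum>i<n. if unk_serial sw a S i then sw i else pw i)"
proof -
  let ?Sat = "unk_saturated p n sw a S C"
  let ?ser = "unk_serial sw a S"
  let ?N = "unk_nser n sw a S C"
  define g where "g i s = (if ?ser i then indicator {S i..C i} s
      else (if s \<in> {S i..C i} then real p - real (?N s) else 0))" for i s
  have Rser: "\<forall>i<n. ?ser i \<longrightarrow> C i = S i + sw i"
    and Rpar: "\<forall>i<n. \<not> ?ser i \<longrightarrow> S i \<le> C i \<and>
        ((\<lambda>s. real p - real (?N s)) has_integral pw i) {S i..C i}"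
    and Nle: "\<forall>s. ?N s \<le> p"
    using R unfolding unk_run_def by auto
  have bnd: "bounded ?Sat"
  proof (rule bounded_subset)
    show "bounded (\<Union>i<n. {S i..C i})" by (intro bounded_UN) auto
    show "?Sat \<subseteq> (\<Union>i<n. {S i..C i})"
    proof
      fix s assume s: "s \<in> ?Sat"
      show "s \<in> (\<Union>i<n. {S i..C i})"
      proof (cases "unk_par_running n sw a S C s")
        case True then show ?thesis unfolding unk_par_running_def by force
      next
        case False
        then have "?N s = p" using s unfolding unk_saturated_def by auto
        then have "{i. i < n \<and> ?ser i \<and> S i \<le> s \<and> s < C i} \<noteq> {}"
          using p unfolding unk_nser_def by (metis card.empty not_one_le_zero)
        then show ?thesis by force
      qed
    qed
  qed
  have gi: "(g i has_integral (if ?ser i then sw i else pw i)) UNIV" if i: "i < n" for i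
  proof (cases "?ser i")
    case True
    have "g i = indicator {S i..C i}" by (rule ext) (simp add: g_def True)
    then show ?thesis using ind_Icc[of "S i" "C i"] Rser pos i True by simp
  next
    case False
    have "((\<lambda>s. if s \<in> {S i..C i} then real p - real (?N s) else 0) has_integral pw i) UNIV"
      unfolding has_integral_restrict_UNIV using Rpar False i by blast
    moreover have "g i = (\<lambda>s. if s \<in> {S i..C i} then real p - real (?N s) else 0)"
      by (rule ext) (simp add: g_def False)
    ultimately show ?thesis using False by simp
  qed
  have sum: "((\<lambda>s. \<Sum>i<n. g i s) has_integral (\<Sum>i<n. if ?ser i then sw i else pw i)) UNIV"
    by (rule has_integral_sum) (use gi in auto)
  have lhs: "((\<lambda>s. real p * indicator ?Sat s) has_integral (real p * measure lborel ?Sat)) UNIV"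
    by (intro has_integral_mult_right ind_int meas bnd)
  show ?thesis
  proof (rule has_integral_le[OF lhs sum])
    fix s :: real
    have g0: "0 \<le> g i s" for i using Nle[rule_format, of s] by (simp add: g_def indicator_def)
    define A where "A = {i. i < n \<and> ?ser i \<and> S i \<le> s \<and> s < C i}"
    have NA: "?N s = card A" unfolding A_def unk_nser_def by simp
    have gA: "(\<Sum>i\<in>A. g i s) = real (card A)"
      by (simp add: A_def g_def indicator_def)
    have ge: "real (?N s) \<le> (\<Sum>i<n. g i s)"
    proof -
      have "(\<Sum>i\<in>A. g i s) \<le> (\<Sum>i<n. g i s)"
        by (rule sum_mono2) (auto simp: A_def g0)
      then show ?thesis using NA gA by simp
    qed
    show "real p * indicator ?Sat s \<le> (\<Sum>i<n. g i s)"
    proof (cases "s \<in> ?Sat")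
      case False
      then show ?thesis by (simp add: sum_nonneg g0)
    next
      case True
      show ?thesis
      proof (cases "unk_par_running n sw a S C s")
        case False
        then have "?N s = p" using True unfolding unk_saturated_def by auto
        then show ?thesis using ge True by simp
      next
        case par: True
        then obtain j where j: "j < n" "\<not> ?ser j" "S j \<le> s" "s < C j"
          unfolding unk_par_running_def by auto
        have jA: "j \<notin> A" using j by (simp add: A_def)
        have fA: "finite A" by (simp add: A_def)
        have "(\<Sum>i\<in>insert j A. g i s) \<le> (\<Sum>i<n. g i s)"
          by (rule sum_mono2) (auto simp: A_def g0 j)
        moreover have "(\<Sum>i\<in>insert j A. g i s) = g j s + real (card A)"
          using jA fA gA by simp
        moreover have "g j s = real p - real (?N s)" using j by (simp add: g_def)
        ultimately show ?thesis using NA True by simp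
      qed
    qed
  qed
qed


lemma exists_valid:
  fixes p n :: nat and sw pw a :: "nat \<Rightarrow> real"
  assumes p: "p \<ge> 1" and H: "\<forall>i<n. 0 \<le> a i \<and> 0 < sw i"
  shows "\<exists>ser r C. valid_schedule p n sw pw a ser r C"
proof -
  define T0 where "T0 = (\<Sum>i<n. a i)"
  define T where "T i = T0 + (\<Sum>k<i. sw k)" for i
  define CC where "CC i = T i + sw i" for i
  define r :: "nat \<Rightarrow> real \<Rightarrow> nat" where "r i s = (if T i \<le> s \<and> s < CC i then 1 else 0)" for i s
  have aT: "a i \<le> T i" if "i < n" for i
  proof -
    have "a i \<le> T0" unfolding T0_def using that H by (intro member_le_sum) auto
    moreover have "0 \<le> (\<Sum>k<i. sw k)"
    proof (rule sum_nonneg)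
      fix x assume "x \<in> {..<i}"
      then have "x < n" using that by simp
      then show "0 \<le> sw x" using H by (simp add: less_imp_le)
    qed
    ultimately show ?thesis by (simp add: T_def)
  qed
  have CT: "CC i \<le> T k" if "i < k" "k < n" for i k
  proof -
    have "(\<Sum>j<Suc i. sw j) \<le> (\<Sum>j<k. sw j)"
    proof (rule sum_mono2)
        fix b assume "b \<in> {..<k} - {..<Suc i}"
        then have "b < n" using that by simp
        then show "0 \<le> sw b" using H by (simp add: less_imp_le)
    qed (use that in \<open>auto\<close>)
    then show ?thesis by (simp add: CC_def T_def)
  qed
  have rind: "(\<lambda>s. real (r i s)) = indicator {T i..<CC i}" for i
    by (rule ext) (simp add: r_def indicator_def)
  have "valid_schedule p n sw pw a (\<lambda>_. True) r CC"
    unfolding valid_schedule_def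
  proof (intro conjI allI impI)
    fix i assume i: "i < n"
    have swi: "0 < sw i" using H i by blast
    show "a i \<le> CC i" using aT[OF i] swi by (simp add: CC_def)
    show "\<And>s. s < a i \<or> CC i \<le> s \<Longrightarrow> r i s = 0" using aT[OF i] by (auto simp: r_def)
    show "\<And>s. r i s \<le> 1" by (simp add: r_def)
    have "(indicator {T i..<CC i} has_integral measure lborel {T i..<CC i}) UNIV"
      by (intro ind_int) (auto intro: bounded_subset[of _ "{T i..CC i}"])
    moreover have "measure lborel {T i..<CC i} = sw i" using swi by (simp add: CC_def)
    moreover have "(\<lambda>s. if s \<in> {a i..CC i} then real (r i s) else 0) = indicator {T i..<CC i}"
      using aT[OF i] by (auto simp: r_def indicator_def intro!: ext)
    ultimately have "((\<lambda>s. if s \<in> {a i..CC i} then real (r i s) else 0) has_integral sw i) UNIV"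
      by simp
    then show "((\<lambda>s. real (r i s)) has_integral (if True then sw i else pw i)) {a i..CC i}"
      unfolding has_integral_restrict_UNIV by simp
  next
    fix s
    have "(\<Sum>i<n. indicator {T i..<CC i} s) \<le> (indicator UNIV s :: real)"
    proof (rule ind_disj_le)
      show "\<forall>i\<in>{..<n}. \<forall>j\<in>{..<n}. i \<noteq> j \<longrightarrow> {T i..<CC i} \<inter> {T j..<CC j} = {}"
      proof (intro ballI impI)
        fix i j assume "i \<in> {..<n}" "j \<in> {..<n}" "i \<noteq> j"
        then have "CC i \<le> T j \<or> CC j \<le> T i" using CT by (metis lessThan_iff nat_neq_iff)
        then show "{T i..<CC i} \<inter> {T j..<CC j} = {}" by auto
      qed
    qed auto
    then have "real (\<Sum>i<n. r i s) \<le> 1" by (simp add: rind[symmetric])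
    then show "(\<Sum>i<n. r i s) \<le> p" using p by linarith
  qed
  then show ?thesis by blast
qed


lemma per_schedule:
  fixes p n :: nat and sw pw a S C :: "nat \<Rightarrow> real"
  assumes p: "p \<ge> 1"
    and H: "\<forall>i<n. 0 \<le> a i \<and> 0 < sw i \<and> sw i \<le> pw i \<and> pw i \<le> real p * sw i"
    and R: "unk_run p n sw pw a S C"
    and V: "valid_schedule p n sw pw a ser' r C'"
  shows "measure lborel (unk_saturated p n sw a S C) \<le> 3 * awake_time n a C'"
proof -
  let ?Sat = "unk_saturated p n sw a S C"
  let ?U = "\<Union>i<n. {a i..<C' i}"
  let ?ser = "unk_serial sw a S"
  let ?N = "unk_nser n sw a S C"
  have aw: "awake_time n a C' = measure lborel ?U" by (simp add: awake_time_def)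
  have U0: "0 \<le> measure lborel ?U" by simp
  show ?thesis
  proof (cases "?Sat \<in> sets borel")
    case False
    then have "measure lborel ?Sat = 0" by (simp add: measure_notin_sets)
    then show ?thesis using U0 aw by simp
  next
    case meas: True
    have pp: "real p > 0" using p by simp
    have W: "real p * measure lborel ?Sat \<le> (\<Sum>i<n. if ?ser i then sw i else pw i)"
      by (rule unk_work[OF p _ R meas]) (use H in \<open>auto simp: less_imp_le\<close>)
    define D where "D = {j. j < n \<and> \<not> ?ser j \<and> ser' j}"
    have split: "(\<Sum>i<n. if ?ser i then sw i else pw i)
        = (\<Sum>i<n. if ?ser i then sw i else if ser' i then 0 else pw i) + (\<Sum>j\<in>D. pw j)"
    proof -
      have "(\<Sum>j\<in>D. pw j) = (\<Sum>i<n. if \<not> ?ser i \<and> ser' i then pw i else 0)"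
        unfolding D_def by (simp add: sum.inter_filter[symmetric])
      then show ?thesis by (auto simp: sum.distrib[symmetric] intro!: sum.cong)
    qed
    have O1: "(\<Sum>i<n. if ?ser i then sw i else if ser' i then 0 else pw i)
        \<le> (\<Sum>i<n. if ser' i then sw i else pw i)"
      by (rule sum_mono) (use H in \<open>auto simp: less_imp_le\<close>)
    have O2: "(\<Sum>i<n. if ser' i then sw i else pw i) \<le> real p * measure lborel ?U"
      by (rule opt_work[OF V])
    have Rpar: "\<forall>i<n. \<not> ?ser i \<longrightarrow> S i \<le> C i \<and>
        ((\<lambda>s. real p - real (?N s)) has_integral pw i) {S i..C i}"
      and Rdis: "\<forall>i<n. \<forall>j<n. i \<noteq> j \<and> \<not> ?ser i \<and> \<not> ?ser j \<longrightarrow> C i \<le> S j \<or> C j \<le> S i"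
      and RaS: "\<forall>i<n. a i \<le> S i"
      using R unfolding unk_run_def by auto
    have mC: "S j + pw j / real p \<le> C j" if j: "j < n" "\<not> ?ser j" for j
    proof -
      have h: "((\<lambda>s. real p - real (?N s)) has_integral pw j) {S j..C j}" and sc: "S j \<le> C j"
        using Rpar j by auto
      have "((\<lambda>s. real p) has_integral (C j - S j) * real p) {S j..C j}"
        using has_integral_const_real[of "real p" "S j" "C j"] sc by simp
      then have "pw j \<le> (C j - S j) * real p"
        by (rule has_integral_le[OF h]) simp
      then show ?thesis using pp by (simp add: field_simps)
    qed
    have Dl: "(\<Sum>j\<in>D. pw j / real p) \<le> 2 * measure lborel ?U"
    proof (rule D_lemma[where w = sw and a = a and S = S])
      show "finite D" by (simp add: D_def)
      show "?U \<in> sets borel" "bounded ?U" by (rule U_props)+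
      show "\<forall>j\<in>D. 0 \<le> pw j / real p \<and> pw j / real p \<le> sw j \<and> a j \<le> S j \<and> S j \<le> a j + sw j
               \<and> {a j..<a j + sw j} \<subseteq> ?U"
      proof
        fix j assume j: "j \<in> D"
        then have jn: "j < n" and ns: "\<not> ?ser j" and os: "ser' j" by (auto simp: D_def)
        have hj: "0 \<le> a j" "0 < sw j" "sw j \<le> pw j" "pw j \<le> real p * sw j" using H jn by auto
        have "pw j / real p \<le> sw j" using hj pp by (simp add: field_simps)
        moreover have "0 \<le> pw j / real p" using hj by simp
        moreover have "S j \<le> a j + sw j" using ns by (simp add: unk_serial_def)
        moreover have "{a j..<a j + sw j} \<subseteq> ?U" by (rule opt_serial[OF V jn os])
        ultimately show "0 \<le> pw j / real p \<and> pw j / real p \<le> sw j \<and> a j \<le> S j \<and> S j \<le> a j + sw j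
               \<and> {a j..<a j + sw j} \<subseteq> ?U" using RaS jn by auto
      qed
      show "\<forall>i\<in>D. \<forall>j\<in>D. i \<noteq> j \<longrightarrow> S i + pw i / real p \<le> S j \<or> S j + pw j / real p \<le> S i"
      proof (intro ballI impI)
        fix i j assume "i \<in> D" "j \<in> D" "i \<noteq> j"
        then have ij: "i < n" "j < n" "\<not> ?ser i" "\<not> ?ser j" "i \<noteq> j" by (auto simp: D_def)
        then have "C i \<le> S j \<or> C j \<le> S i" using Rdis by blast
        then show "S i + pw i / real p \<le> S j \<or> S j + pw j / real p \<le> S i"
          using mC[of i] mC[of j] ij by auto
      qed
    qed
    have "(\<Sum>j\<in>D. pw j) = real p * (\<Sum>j\<in>D. pw j / real p)"
      using pp by (simp add: sum_distrib_left)
    then have "(\<Sum>j\<in>D. pw j) \<le> real p * (2 * measure lborel ?U)"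
      using Dl pp by (simp add: mult_left_mono)
    then have "real p * measure lborel ?Sat \<le> real p * (3 * measure lborel ?U)"
      using W split O1 O2 by (simp add: algebra_simps)
    then show ?thesis using pp aw by simp
  qed
qed

theorem lemma5p3:
  fixes p n :: nat and sw pw a S C :: "nat \<Rightarrow> real"
  assumes "p \<ge> 1"
    and "\<forall>i<n. 0 \<le> a i \<and> 0 < sw i \<and> sw i \<le> pw i \<and> pw i \<le> real p * sw i"
    and "unk_run p n sw pw a S C"
  shows "measure lborel (unk_saturated p n sw a S C) \<le> 3 * opt_awake p n sw pw a"
proof -
  let ?X = "{awake_time n a C | ser r C. valid_schedule p n sw pw a ser r C}"
  have ne: "?X \<noteq> {}" using exists_valid[OF assms(1), of n a sw pw] assms(2) by auto
  have "measure lborel (unk_saturated p n sw a S C) / 3 \<le> Inf ?X"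
  proof (rule cInf_greatest[OF ne])
    fix x assume "x \<in> ?X"
    then obtain ser r C' where x: "x = awake_time n a C'" and v: "valid_schedule p n sw pw a ser r C'"
      by blast
    show "measure lborel (unk_saturated p n sw a S C) / 3 \<le> x"
      using per_schedule[OF assms v] x by simp
  qed
  then show ?thesis unfolding opt_awake_def by simp
qed


end
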